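(* Let $\Gamma\subset\mathbb{F}_q[x]^2$ be an $\mathbb{F}_q[x]$-lattice of rank $2$ with $\mathrm{vol}(\Gamma)=q^m$, and let $r,s\ge0$ be integers. Then the number of vectors $v=(g,h)\in\Gamma$ that are primitive in $\Gamma$ and satisfy $\deg g\le r$, $\deg h\le s$ is at most $\max(q,q^{r+s-m+2})$.
   Context: An $\mathbb{F}_q[x]$-lattice of rank $n$ is an $\mathbb{F}_q[x]$-submodule $\Gamma\subset\mathbb{F}_q[x]^n$ of finite index; $\mathrm{vol}(\Gamma)=[\mathbb{F}_q[x]^n:\Gamma]$. Degrees of polynomials use $\deg0=-\infty$. $v\in\Gamma$ is primitive in $\Gamma$ if $v$ cannot be written as $v=aw$ with $w\in\Gamma$ and $a\in\mathbb{F}_q[x]$, $\deg a\ge1$. *)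

theory Defs
  imports "HOL-Computational_Algebra.Polynomial" "HOL-Library.Product_Plus" "HOL-Library.Cardinality"
begin

definition vsmult :: "'a::comm_ring_1 poly \<Rightarrow> 'a poly \<times> 'a poly \<Rightarrow> 'a poly \<times> 'a poly" where
  "vsmult a v = (a * fst v, a * snd v)"

definition vol2 :: "('a::comm_ring_1 poly \<times> 'a poly) set \<Rightarrow> nat" where
  "vol2 \<Gamma> = card ((\<lambda>v. {v + w | w. w \<in> \<Gamma>}) ` UNIV)"

text \<open>An F_q[x]-lattice of rank 2: a submodule of F_q[x]^2 of finite index.\<close>
definition lattice2 :: "('a::comm_ring_1 poly \<times> 'a poly) set \<Rightarrow> bool" where
  "lattice2 \<Gamma> \<longleftrightarrow> 0 \<in> \<Gamma> \<and> (\<forall>v\<in>\<Gamma>. \<forall>w\<in>\<Gamma>. v + w \<in> \<Gamma>)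
     \<and> (\<forall>a. \<forall>v\<in>\<Gamma>. vsmult a v \<in> \<Gamma>)
     \<and> finite ((\<lambda>v. {v + w | w. w \<in> \<Gamma>}) ` UNIV)"

definition primitive_in :: "('a::comm_ring_1 poly \<times> 'a poly) set \<Rightarrow> 'a poly \<times> 'a poly \<Rightarrow> bool" where
  "primitive_in \<Gamma> v \<longleftrightarrow> v \<in> \<Gamma> \<and>
     \<not> (\<exists>a w. w \<in> \<Gamma> \<and> a \<noteq> 0 \<and> degree a \<ge> 1 \<and> v = vsmult a w)"

end

theory Submission
  imports Defs
begin

definition Bset :: "nat \<Rightarrow> 'a::zero poly set" where
  "Bset n = {p. p = 0 \<or> degree p < n}"

lemma Bset_Suc: "(Bset (Suc n) :: 'a::zero poly set) = (\<lambda>(c,p). pCons c p) ` (UNIV \<times> Bset n)"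
proof (rule equalityI)
  show "(Bset (Suc n) :: 'a poly set) \<subseteq> (\<lambda>(c,p). pCons c p) ` (UNIV \<times> Bset n)"
  proof (rule subsetI)
    fix x :: "'a poly" assume x: "x \<in> Bset (Suc n)"
    obtain a q where xq: "x = pCons a q" by (cases x)
    have "q \<in> Bset n"
    proof (cases "q = 0")
      case False
      then have "degree x = Suc (degree q)" using xq degree_pCons_eq by simp
      moreover have "x \<noteq> 0" using False xq by simp
      ultimately show ?thesis using x by (auto simp: Bset_def)
    qed (simp add: Bset_def)
    then show "x \<in> (\<lambda>(c,p). pCons c p) ` (UNIV \<times> Bset n)"
      using xq by force
  qed
next
  show "(\<lambda>(c,p). pCons c p) ` (UNIV \<times> Bset n) \<subseteq> (Bset (Suc n) :: 'a poly set)"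
  proof (rule subsetI)
    fix x assume "x \<in> (\<lambda>(c,p). pCons c p) ` (UNIV \<times> Bset n)"
    then obtain c p where x: "x = pCons c p" and p: "p = 0 \<or> degree p < n"
      by (auto simp: Bset_def)
    show "x \<in> Bset (Suc n)"
      using p by (cases "p = 0") (auto simp: Bset_def x degree_pCons_eq)
  qed
qed

lemma Bset_card: "finite (Bset n :: 'a::{finite,zero} poly set) \<and> card (Bset n :: 'a poly set) = CARD('a) ^ n"
proof (induction n)
  case 0
  have "Bset 0 = {0 :: 'a poly}" by (auto simp: Bset_def)
  then show ?case by simp
next
  case (Suc n)
  have inj: "inj_on (\<lambda>(c,p). pCons c p) (UNIV \<times> (Bset n :: 'a poly set))"
    by (auto simp: inj_on_def)
  show ?case
    unfolding Bset_Suc using Suc inj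
    by (simp add: card_image card_cartesian_product)
qed

lemma ideal_gen:
  fixes S :: "'a::field poly set"
  assumes add: "\<And>x y. x\<in>S \<Longrightarrow> y\<in>S \<Longrightarrow> x+y\<in>S"
    and mul: "\<And>a x. x\<in>S \<Longrightarrow> a*x\<in>S" and x0: "x0\<in>S" "x0\<noteq>0"
  shows "\<exists>d\<in>S. d\<noteq>0 \<and> (\<forall>x\<in>S. d dvd x)"
proof -
  define n where "n = (LEAST n. \<exists>d\<in>S. d\<noteq>0 \<and> degree d = n)"
  have "\<exists>d\<in>S. d\<noteq>0 \<and> degree d = n" unfolding n_def
    by (rule LeastI[of _ "degree x0"]) (use x0 in auto)
  then obtain d where d: "d\<in>S" "d\<noteq>0" "degree d = n" by blast
  have min: "\<And>e. e\<in>S \<Longrightarrow> e\<noteq>0 \<Longrightarrow> n \<le> degree e" unfolding n_def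
    by (rule Least_le) auto
  show ?thesis
  proof (intro bexI conjI ballI)
    fix x assume x: "x\<in>S"
    have "x mod d = x + (- (x div d)) * d" by (simp add: minus_div_mult_eq_mod[symmetric])
    hence "x mod d \<in> S" using add mul x d by metis
    with degree_mod_less[OF d(2), of x] min d show "d dvd x"
      by (metis not_le mod_eq_0_iff_dvd)
  qed (use d in auto)
qed

definition D :: "'a::comm_ring_1 poly \<times> 'a poly \<Rightarrow> 'a poly \<times> 'a poly \<Rightarrow> 'a poly" where
  "D u v = fst u * snd v - snd u * fst v"

lemma D_add: "D u (v + w) = D u v + D u w" by (simp add: D_def algebra_simps)
lemma D_diff: "D u (v - w) = D u v - D u w" by (simp add: D_def algebra_simps)
lemma D_smult: "D u (vsmult a v) = a * D u v" by (simp add: D_def vsmult_def algebra_simps)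
lemma D_smult_left: "D (vsmult a u) v = a * D u v" by (simp add: D_def vsmult_def algebra_simps)

lemma lat_props:
  assumes "lattice2 \<Gamma>"
  shows "0 \<in> \<Gamma>" "\<And>v w. v\<in>\<Gamma> \<Longrightarrow> w\<in>\<Gamma> \<Longrightarrow> v+w\<in>\<Gamma>"
    "\<And>a v. v\<in>\<Gamma> \<Longrightarrow> vsmult a v \<in> \<Gamma>" "\<And>v w. v\<in>\<Gamma> \<Longrightarrow> w\<in>\<Gamma> \<Longrightarrow> v - w\<in>\<Gamma>"
proof -
  show "0 \<in> \<Gamma>" "\<And>v w. v\<in>\<Gamma> \<Longrightarrow> w\<in>\<Gamma> \<Longrightarrow> v+w\<in>\<Gamma>"
    "\<And>a v. v\<in>\<Gamma> \<Longrightarrow> vsmult a v \<in> \<Gamma>" using assms by (auto simp: lattice2_def)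
  fix v w assume "v\<in>\<Gamma>" "w\<in>\<Gamma>"
  moreover have "v - w = v + vsmult (-1) w" by (simp add: vsmult_def prod_eq_iff)
  ultimately show "v - w \<in> \<Gamma>" using assms unfolding lattice2_def by metis
qed

lemma prim_nonzero:
  fixes v :: "'a::field poly \<times> 'a poly"
  assumes "lattice2 \<Gamma>" "primitive_in \<Gamma> v" shows "v \<noteq> 0"
proof
  assume v0: "v = 0"
  have "0 \<in> \<Gamma>" using lat_props(1)[OF assms(1)] .
  moreover have "(0::'a poly \<times> 'a poly) = vsmult [:0,1:] 0" by (simp add: vsmult_def zero_prod_def)
  moreover have "[:0,1:] \<noteq> (0::'a poly)" "1 \<le> degree [:0,1::'a:]" by simp_all
  ultimately show False using assms(2) v0 unfolding primitive_in_def by blast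
qed

theorem mainTheorem9:
  fixes \<Gamma> :: "('a::{finite,field} poly \<times> 'a poly) set" and r s m :: nat
  assumes "lattice2 \<Gamma>"
    and "vol2 \<Gamma> = CARD('a) ^ m"
  shows "real (card {v. primitive_in \<Gamma> v \<and> degree (fst v) \<le> r \<and> degree (snd v) \<le> s})
           \<le> max (real CARD('a)) (real CARD('a) powi (int r + int s - int m + 2))"
proof -
  define q where "q = CARD('a)"
  have q2: "q \<ge> 2"
  proof -
    have "card {0::'a, 1} = 2" by simp
    moreover have "card {0::'a, 1} \<le> card (UNIV :: 'a set)" by (rule card_mono) auto
    ultimately show ?thesis unfolding q_def by simp
  qed
  note L0 = lat_props(1)[OF assms(1)] and Ladd = lat_props(2)[OF assms(1)]
    and Lsm = lat_props(3)[OF assms(1)] and Ldiff = lat_props(4)[OF assms(1)]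
  define P where "P = {v. primitive_in \<Gamma> v \<and> degree (fst v) \<le> r \<and> degree (snd v) \<le> s}"
  define W where "W = {v. v \<in> \<Gamma> \<and> degree (fst v) \<le> r \<and> degree (snd v) \<le> s}"
  have PW: "P \<subseteq> W" unfolding P_def W_def primitive_in_def by auto
  have finW: "finite W"
  proof (rule finite_subset)
    show "W \<subseteq> Bset (Suc r) \<times> Bset (Suc s)"
    proof (rule subsetI)
      fix x assume "x \<in> W"
      then have "degree (fst x) < Suc r" "degree (snd x) < Suc s" unfolding W_def by auto
      then show "x \<in> Bset (Suc r) \<times> Bset (Suc s)" unfolding Bset_def by (simp add: mem_Times_iff)
    qed
    show "finite ((Bset (Suc r) :: 'a poly set) \<times> (Bset (Suc s) :: 'a poly set))"
      using Bset_card[where 'a='a] by (simp add: finite_cartesian_product)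
  qed
  have cPW: "card P \<le> card W" using PW finW by (rule card_mono[rotated])
  show ?thesis
  proof (cases "P = {}")
    case True
    then show ?thesis by (simp add: P_def[symmetric])
  next
    case False
    then obtain u where uP: "u \<in> P" by blast
    define g1 h1 where "g1 = fst u" and "h1 = snd u"
    have uG: "u \<in> \<Gamma>" and uprim: "primitive_in \<Gamma> u" and g1r: "degree g1 \<le> r"
      and h1s: "degree h1 \<le> s"
      using uP unfolding P_def primitive_in_def g1_def h1_def by auto
    have u0: "u \<noteq> 0" using prim_nonzero[OF assms(1) uprim] .
    have ugh: "u = (g1, h1)" by (simp add: g1_def h1_def)
    have gh0: "g1 \<noteq> 0 \<or> h1 \<noteq> 0" using u0 ugh by (auto simp: zero_prod_def)
    define S1 where "S1 = {a*g1 + b*h1 | a b. True}"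
    have "g1 = 1*g1 + 0*h1" "h1 = 0*g1 + 1*h1" by simp_all
    then have g1S: "g1 \<in> S1" and h1S: "h1 \<in> S1" unfolding S1_def by blast+
    have "\<exists>t\<in>S1. t\<noteq>0 \<and> (\<forall>x\<in>S1. t dvd x)"
    proof (rule ideal_gen)
      fix x y assume "x \<in> S1" "y \<in> S1"
      then obtain a b a' b' where "x = a*g1 + b*h1" "y = a'*g1+b'*h1" unfolding S1_def by auto
      then have "x + y = (a+a')*g1 + (b+b')*h1" by (simp add: algebra_simps)
      then show "x + y \<in> S1" unfolding S1_def by blast
    next
      fix c x assume "x \<in> S1"
      then obtain a b where "x = a*g1 + b*h1" unfolding S1_def by auto
      then have "c*x = (c*a)*g1 + (c*b)*h1" by (simp add: algebra_simps)
      then show "c * x \<in> S1" unfolding S1_def by blast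
    next
      show "(if g1 \<noteq> 0 then g1 else h1) \<in> S1" using g1S h1S by simp
      show "(if g1 \<noteq> 0 then g1 else h1) \<noteq> 0" using gh0 by auto
    qed
    then obtain t where tS: "t \<in> S1" and t0: "t \<noteq> 0" and tdvd: "\<forall>x\<in>S1. t dvd x" by blast
    obtain \<alpha> \<beta> where tab: "t = \<alpha>*g1 + \<beta>*h1" using tS unfolding S1_def by auto
    have tg: "t dvd g1" and th: "t dvd h1" using tdvd g1S h1S by auto
    define g0 h0 where "g0 = g1 div t" and "h0 = h1 div t"
    define u0 where "u0 = (g0, h0)"
    have g1eq: "g1 = t * g0" and h1eq: "h1 = t * h0" using tg th unfolding g0_def h0_def by simp_all
    have uu0: "u = vsmult t u0" using ugh g1eq h1eq by (simp add: vsmult_def u0_def)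
    have bez: "\<alpha>*g0 + \<beta>*h0 = 1"
    proof -
      have "t * (\<alpha>*g0 + \<beta>*h0) = \<alpha>*(t*g0) + \<beta>*(t*h0)" by (simp add: algebra_simps)
      also have "\<dots> = \<alpha>*g1 + \<beta>*h1" using g1eq h1eq by simp
      also have "\<dots> = t * 1" using tab by simp
      finally have "t * (\<alpha>*g0 + \<beta>*h0) = t * 1" .
      then show ?thesis using t0 by simp
    qed
    define cf where "cf z = \<alpha>*fst z + \<beta>*snd z" for z :: "'a poly \<times> 'a poly"
    have F0: "z = vsmult (cf z) u0" if "D u0 z = 0" for z
    proof -
      have e: "g0 * snd z - h0 * fst z = 0" using that by (simp add: D_def u0_def)
      have "cf z * g0 - fst z * (\<alpha>*g0 + \<beta>*h0) = \<beta>*(g0 * snd z - h0 * fst z)"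
        by (simp add: cf_def algebra_simps)
      then have 1: "cf z * g0 = fst z" using e bez by simp
      have "cf z * h0 - snd z * (\<alpha>*g0 + \<beta>*h0) = - \<alpha>*(g0 * snd z - h0 * fst z)"
        by (simp add: cf_def algebra_simps)
      then have 2: "cf z * h0 = snd z" using e bez by simp
      show ?thesis using 1 2 by (simp add: vsmult_def u0_def prod_eq_iff mult.commute)
    qed
    have F1: "t dvd cf v" if vG: "v \<in> \<Gamma>" and vD: "D u0 v = 0" for v
    proof -
      define S2 where "S2 = {a*t + b*cf v | a b. True}"
      have "\<exists>e\<in>S2. e\<noteq>0 \<and> (\<forall>x\<in>S2. e dvd x)"
      proof (rule ideal_gen)
        fix x y assume "x \<in> S2" "y \<in> S2"
        then obtain a b a' b' where "x = a*t + b*cf v" "y = a'*t+b'*cf v" unfolding S2_def by auto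
        then have "x + y = (a+a')*t + (b+b')*cf v" by (simp add: algebra_simps)
        then show "x + y \<in> S2" unfolding S2_def by blast
      next
        fix c x assume "x \<in> S2"
        then obtain a b where "x = a*t + b*cf v" unfolding S2_def by auto
        then have "c*x = (c*a)*t + (c*b)*cf v" by (simp add: algebra_simps)
        then show "c * x \<in> S2" unfolding S2_def by blast
      next
        have "t = 1*t + 0*cf v" by simp
        then show "t \<in> S2" unfolding S2_def by blast
        show "t \<noteq> 0" by (rule t0)
      qed
      then obtain e where eS: "e \<in> S2" and e0: "e \<noteq> 0" and edvd: "\<forall>x\<in>S2. e dvd x" by blast
      obtain a b where eab: "e = a*t + b*cf v" using eS unfolding S2_def by auto
      have "t = 1*t + 0*cf v" "cf v = 0*t + 1 * cf v" by simp_all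
      then have "t \<in> S2" "cf v \<in> S2" unfolding S2_def by blast+
      then have et: "e dvd t" and ec: "e dvd cf v" using edvd by auto
      have vv: "v = vsmult (cf v) u0" using F0 vD by blast
      have "vsmult e u0 = vsmult a u + vsmult b v"
        by (subst vv, simp add: uu0 eab vsmult_def algebra_simps)
      moreover have "vsmult a u + vsmult b v \<in> \<Gamma>" by (intro Ladd Lsm uG vG)
      ultimately have eG: "vsmult e u0 \<in> \<Gamma>" by simp
      have te: "t = (t div e) * e" using et by simp
      have "u = vsmult (t div e) (vsmult e u0)"
        using uu0 te by (simp add: vsmult_def mult.assoc)
      moreover have "t div e \<noteq> 0" using te t0 by auto
      moreover have np: "\<not> (\<exists>a w. w \<in> \<Gamma> \<and> a \<noteq> 0 \<and> 1 \<le> degree a \<and> u = vsmult a w)"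
        using uprim unfolding primitive_in_def by blast
      ultimately have "\<not> 1 \<le> degree (t div e)" using eG by blast
      then have "degree (t div e) = 0" by simp
      then have tau: "t div e = [:coeff (t div e) 0:]" by (simp add: degree_0_id)
      define \<tau> where "\<tau> = coeff (t div e) 0"
      note tau = tau[folded \<tau>_def]
      have "\<tau> \<noteq> 0" using \<open>t div e \<noteq> 0\<close> tau by auto
      then have "e = smult (inverse \<tau>) t" using te tau by simp
      then have "t dvd e" by (auto intro: dvd_smult)
      then show ?thesis using ec by (rule dvd_trans)
    qed
    have F2: "v = vsmult (cf v div t) u" if "v \<in> \<Gamma>" "D u0 v = 0" for v
    proof -
      have c: "cf v = (cf v div t) * t" using F1[OF that] by simp
      have "v = vsmult (cf v) u0" using F0[OF that(2)] .
      also have "\<dots> = vsmult ((cf v div t) * t) u0" using c by simp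
      also have "\<dots> = vsmult (cf v div t) u" by (simp add: uu0 vsmult_def mult.assoc)
      finally show ?thesis .
    qed
    show ?thesis
    proof (cases "\<forall>v\<in>W. D u0 v = 0")
      case True
      have sub: "P \<subseteq> (\<lambda>\<kappa>. vsmult [:\<kappa>:] u) ` UNIV"
      proof (rule subsetI)
        fix v assume vP: "v \<in> P"
        then have vW: "v \<in> W" using PW by blast
        then have vG: "v \<in> \<Gamma>" unfolding W_def by simp
        have vprim: "primitive_in \<Gamma> v" using vP unfolding P_def by simp
        have veq: "v = vsmult (cf v div t) u" using F2[OF vG] True vW by blast
        have "v \<noteq> 0" using prim_nonzero[OF assms(1) vprim] .
        then have nz: "cf v div t \<noteq> 0" using veq by (auto simp: vsmult_def zero_prod_def)
        have np: "\<not> (\<exists>a w. w \<in> \<Gamma> \<and> a \<noteq> 0 \<and> 1 \<le> degree a \<and> v = vsmult a w)"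
          using vprim unfolding primitive_in_def by blast
        then have "\<not> 1 \<le> degree (cf v div t)" using nz uG veq by blast
        then have "degree (cf v div t) = 0" by simp
        then have "cf v div t = [:coeff (cf v div t) 0:]" by (simp add: degree_0_id)
        then have "v = vsmult [:coeff (cf v div t) 0:] u" using veq by simp
        then show "v \<in> (\<lambda>\<kappa>. vsmult [:\<kappa>:] u) ` UNIV" by blast
      qed
      have "card P \<le> card ((\<lambda>\<kappa>. vsmult [:\<kappa>:] u) ` (UNIV::'a set))"
        using sub by (rule card_mono[rotated]) simp
      also have "\<dots> \<le> q" unfolding q_def by (rule card_image_le) simp
      finally have "real (card P) \<le> real q" by simp
      then show ?thesis by (simp add: P_def q_def)
    next
      case False
      then obtain v1 where v1W: "v1 \<in> W" and v1D: "D u0 v1 \<noteq> 0" by blast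
      define J where "J = {D u0 v | v. v \<in> \<Gamma>}"
      have "\<exists>\<delta>\<in>J. \<delta> \<noteq> 0 \<and> (\<forall>x\<in>J. \<delta> dvd x)"
      proof (rule ideal_gen)
        fix x y assume "x\<in>J" "y\<in>J"
        then obtain v w where "v\<in>\<Gamma>" "w\<in>\<Gamma>" "x = D u0 v" "y = D u0 w" unfolding J_def by blast
        then have "x + y = D u0 (v + w)" "v + w \<in> \<Gamma>" by (simp_all add: D_add Ladd)
        then show "x+y \<in> J" unfolding J_def by blast
      next
        fix a x assume "x\<in>J"
        then obtain v where "v\<in>\<Gamma>" "x = D u0 v" unfolding J_def by blast
        then have "a*x = D u0 (vsmult a v)" "vsmult a v \<in> \<Gamma>" by (simp_all add: D_smult Lsm)
        then show "a*x \<in> J" unfolding J_def by blast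
      next
        show "D u0 v1 \<in> J" using v1W unfolding J_def W_def by blast
        show "D u0 v1 \<noteq> 0" by (rule v1D)
      qed
      then obtain \<delta> where \<delta>J: "\<delta>\<in>J" and \<delta>0: "\<delta>\<noteq>0" and \<delta>dvd: "\<forall>x\<in>J. \<delta> dvd x" by blast
      obtain w0 where w0G: "w0 \<in> \<Gamma>" and w0D: "D u0 w0 = \<delta>" using \<delta>J unfolding J_def by blast
      define y0 where "y0 = (-\<beta>, \<alpha>)"
      have "D u0 y0 = \<alpha>*g0 + \<beta>*h0" by (simp add: D_def u0_def y0_def algebra_simps)
      then have y0D: "D u0 y0 = 1" using bez by simp
      define coset where "coset = (\<lambda>z. {z + w | w. w \<in> \<Gamma>})"
      have cshift: "coset (z + \<gamma>) = coset z" if g: "\<gamma> \<in> \<Gamma>" for z \<gamma>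
      proof (rule set_eqI)
        fix x
        show "x \<in> coset (z + \<gamma>) \<longleftrightarrow> x \<in> coset z"
        proof
          assume "x \<in> coset (z+\<gamma>)"
          then obtain w where "w\<in>\<Gamma>" "x = z + \<gamma> + w" unfolding coset_def by blast
          then have "x = z + (\<gamma> + w)" "\<gamma> + w \<in> \<Gamma>" using g Ladd by (simp_all add: add.assoc)
          then show "x \<in> coset z" unfolding coset_def by blast
        next
          assume "x \<in> coset z"
          then obtain w where "w\<in>\<Gamma>" "x = z + w" unfolding coset_def by blast
          then have "x = (z + \<gamma>) + (w - \<gamma>)" "w - \<gamma> \<in> \<Gamma>" using g Ldiff by (simp_all add: algebra_simps)
          then show "x \<in> coset (z+\<gamma>)" unfolding coset_def by blast
        qed
      qed
      define R where "R = (\<lambda>(c,b). coset (vsmult c y0 + vsmult b u0)) ` (Bset (degree \<delta>) \<times> Bset (degree t))"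
      have cover: "range coset \<subseteq> R"
      proof (rule subsetI)
        fix X assume "X \<in> range coset"
        then obtain z where X: "X = coset z" by blast
        define c0 where "c0 = D u0 z"
        define c where "c = c0 mod \<delta>"
        define z2 where "z2 = z - vsmult (c0 div \<delta>) w0 - vsmult c y0"
        have "D u0 z2 = c0 - (c0 div \<delta>) * \<delta> - c"
          by (simp add: z2_def D_diff D_smult w0D y0D c0_def)
        also have "\<dots> = 0" by (simp add: c_def minus_div_mult_eq_mod)
        finally have "D u0 z2 = 0" .
        then have z2eq0: "z2 = vsmult (cf z2) u0" by (rule F0)
        define c2 where "c2 = cf z2"
        have z2eq: "z2 = vsmult c2 u0" using z2eq0 unfolding c2_def .
        define b where "b = c2 mod t"
        define a2 where "a2 = c2 div t"
        have bb: "b + a2 * t = c2" by (simp add: b_def a2_def)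
        have "vsmult b u0 + vsmult a2 u = vsmult (b + a2 * t) u0"
          by (simp add: uu0 vsmult_def algebra_simps)
        then have z2eq': "z2 = vsmult b u0 + vsmult a2 u" using z2eq bb by simp
        have zz: "z = z2 + vsmult (c0 div \<delta>) w0 + vsmult c y0" by (simp add: z2_def)
        have zsplit: "z = (vsmult c y0 + vsmult b u0) + (vsmult (c0 div \<delta>) w0 + vsmult a2 u)"
          unfolding zz z2eq' by (simp add: algebra_simps)
        have gG: "vsmult (c0 div \<delta>) w0 + vsmult a2 u \<in> \<Gamma>" by (intro Ladd Lsm w0G uG)
        have Xe: "X = coset (vsmult c y0 + vsmult b u0)" unfolding X using cshift[OF gG, of "vsmult c y0 + vsmult b u0"] zsplit by simp
        have cB: "c \<in> Bset (degree \<delta>)" unfolding Bset_def c_def using degree_mod_less[OF \<delta>0, of c0] by auto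
        have bB: "b \<in> Bset (degree t)" unfolding Bset_def b_def using degree_mod_less[OF t0, of "c2"] by auto
        show "X \<in> R" unfolding R_def Xe using cB bB by (auto intro!: image_eqI[of _ _ "(c,b)"])
      qed
      have finB: "\<And>n. finite (Bset n :: 'a poly set)" and cardB: "\<And>n. card (Bset n :: 'a poly set) = q ^ n"
        using Bset_card[where 'a='a] unfolding q_def by auto
      have "q ^ m = card (range coset)" using assms(2) unfolding vol2_def coset_def q_def by simp
      also have "\<dots> \<le> card R" by (rule card_mono) (use cover finB in \<open>auto simp: R_def\<close>)
      also have "\<dots> \<le> card ((Bset (degree \<delta>) :: 'a poly set) \<times> (Bset (degree t) :: 'a poly set))"
        unfolding R_def by (rule card_image_le) (simp add: finB)
      also have "\<dots> = q ^ (degree \<delta> + degree t)" by (simp add: card_cartesian_product cardB power_add)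
      finally have qq: "q ^ m \<le> q ^ (degree \<delta> + degree t)" .
      have mle: "m \<le> degree \<delta> + degree t" using power_le_imp_le_exp[of q, OF _ qq] q2 by simp
      define k where "k = (if g1 = 0 then s - degree h1 else if h1 = 0 then r - degree g1
                          else min (r - degree g1) (s - degree h1))"
      have kg: "degree g1 + k \<le> r" if "g1 \<noteq> 0" using that gh0 g1r h1s unfolding k_def by auto
      have kh: "degree h1 + k \<le> s" if "h1 \<noteq> 0" using that gh0 g1r h1s unfolding k_def by auto
      have krs: "k \<le> r + s" using gh0 g1r h1s unfolding k_def by auto
      have Kb: "a \<in> Bset (Suc k)" if a1: "degree (a*g1) \<le> r" and a2: "degree (a*h1) \<le> s" for a
      proof (cases "a = 0")
        case True then show ?thesis by (simp add: Bset_def)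
      next
        case False
        have "degree a \<le> k"
        proof (cases "g1 = 0")
          case True
          then have h: "h1 \<noteq> 0" using gh0 by simp
          have kk: "k = s - degree h1" using True unfolding k_def by simp
          have "degree a + degree h1 \<le> s" using a2 degree_mult_eq[OF False h] by simp
          then show ?thesis unfolding kk by arith
        next
          case g: False
          have e1: "degree a + degree g1 \<le> r" using a1 degree_mult_eq[OF False g] by simp
          show ?thesis
          proof (cases "h1 = 0")
            case True
            have kk: "k = r - degree g1" using True g unfolding k_def by simp
            show ?thesis unfolding kk using e1 by arith
          next
            case h: False
            have kk: "k = min (r - degree g1) (s - degree h1)" using h g unfolding k_def by simp
            have "degree a + degree h1 \<le> s" using a2 degree_mult_eq[OF False h] by simp
            then show ?thesis unfolding kk using e1 by arith
          qed
        qed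
        then show ?thesis by (simp add: Bset_def)
      qed
      have Db: "degree (D u v) \<le> r + s - k" if v1: "degree (fst v) \<le> r" and v2: "degree (snd v) \<le> s" for v
      proof -
        have A: "degree (g1 * snd v) \<le> r + s - k"
        proof (cases "g1 = 0")
          case False
          then show ?thesis using degree_mult_le[of g1 "snd v"] kg[OF False] v2 by arith
        qed simp
        have B: "degree (h1 * fst v) \<le> r + s - k"
        proof (cases "h1 = 0")
          case False
          then show ?thesis using degree_mult_le[of h1 "fst v"] kh[OF False] v1 by arith
        qed simp
        have "D u v = g1 * snd v - h1 * fst v" by (simp add: D_def g1_def h1_def)
        then show ?thesis using degree_diff_le[OF A B] by simp
      qed
      have Dt: "D u v = t * D u0 v" for v by (simp add: uu0 D_smult_left)
      have Du0b: "degree t + degree (D u0 v) \<le> r + s - k" if "v\<in>W" "D u0 v \<noteq> 0" for v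
      proof -
        have "degree (D u v) = degree t + degree (D u0 v)" using Dt degree_mult_eq[OF t0 that(2)] by simp
        moreover have "degree (D u v) \<le> r + s - k" using that(1) Db unfolding W_def by auto
        ultimately show ?thesis by simp
      qed
      have "D u0 v1 \<in> J" using v1W unfolding J_def W_def by blast
      then have "\<delta> dvd D u0 v1" using \<delta>dvd by blast
      then have "degree \<delta> \<le> degree (D u0 v1)" using v1D by (rule dvd_imp_degree_le)
      then have h\<delta>: "degree \<delta> + degree t \<le> r + s - k" using Du0b[OF v1W v1D] by simp
      define N where "N = r + s - k - degree t - degree \<delta>"
      have img: "D u0 v \<in> (\<lambda>c. \<delta> * c) ` Bset (Suc N)" if vW: "v \<in> W" for v
      proof -
        have "D u0 v \<in> J" using vW unfolding J_def W_def by blast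
        then have "\<delta> dvd D u0 v" using \<delta>dvd by blast
        then obtain c where c: "D u0 v = \<delta> * c" by (rule dvdE)
        have "c \<in> Bset (Suc N)"
        proof (cases "c = 0")
          case False
          then have "D u0 v \<noteq> 0" using c \<delta>0 by simp
          then have "degree t + degree (D u0 v) \<le> r + s - k" using Du0b vW by blast
          moreover have "degree (D u0 v) = degree \<delta> + degree c" using c degree_mult_eq[OF \<delta>0 False] by simp
          ultimately show ?thesis unfolding Bset_def N_def by auto
        qed (simp add: Bset_def)
        then show ?thesis using c by blast
      qed
      define rep where "rep y = (SOME x. x \<in> W \<and> D u0 x = y)" for y
      define F where "F v = (D u0 v, cf (v - rep (D u0 v)) div t)" for v
      have repW: "rep (D u0 v) \<in> W \<and> D u0 (rep (D u0 v)) = D u0 v" if "v \<in> W" for v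
        unfolding rep_def by (rule someI[of _ v]) (use that in simp)
      have decomp: "v - rep (D u0 v) = vsmult (snd (F v)) u" if vW: "v\<in>W" for v
      proof -
        define x where "x = rep (D u0 v)"
        have xW: "x \<in> W" and xD: "D u0 x = D u0 v" using repW[OF vW] unfolding x_def by auto
        have "v - x \<in> \<Gamma>" using vW xW Ldiff unfolding W_def by auto
        moreover have "D u0 (v - x) = 0" using xD by (simp add: D_diff)
        ultimately have "v - x = vsmult (cf (v - x) div t) u" by (rule F2)
        then show ?thesis unfolding F_def x_def by simp
      qed
      have injF: "inj_on F W"
      proof (rule inj_onI)
        fix v v' assume vW: "v \<in> W" and vW': "v' \<in> W" and FF: "F v = F v'"
        then have e1: "D u0 v = D u0 v'" and e2: "snd (F v) = snd (F v')" unfolding F_def by auto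
        have "v = rep (D u0 v) + vsmult (snd (F v)) u" using decomp[OF vW] by (simp add: algebra_simps)
        also have "\<dots> = rep (D u0 v') + vsmult (snd (F v')) u" using e1 e2 by simp
        also have "\<dots> = v'" using decomp[OF vW'] by (simp add: algebra_simps)
        finally show "v = v'" .
      qed
      have FW: "F ` W \<subseteq> ((\<lambda>c. \<delta>*c) ` Bset (Suc N)) \<times> (Bset (Suc k) :: 'a poly set)"
      proof (rule subsetI)
        fix y assume "y \<in> F ` W"
        then obtain v where vW: "v \<in> W" and y: "y = F v" by blast
        define x where "x = rep (D u0 v)"
        have xW: "x \<in> W" using repW[OF vW] unfolding x_def by auto
        have dec: "v - x = vsmult (snd (F v)) u" using decomp[OF vW] unfolding x_def .
        have "degree (fst (v - x)) \<le> r" using vW xW unfolding W_def by (auto intro: degree_diff_le)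
        moreover have "degree (snd (v - x)) \<le> s" using vW xW unfolding W_def by (auto intro: degree_diff_le)
        ultimately have "degree (snd (F v) * g1) \<le> r" "degree (snd (F v) * h1) \<le> s"
          unfolding dec by (simp_all add: vsmult_def g1_def h1_def)
        then have "snd (F v) \<in> Bset (Suc k)" by (rule Kb)
        moreover have "fst (F v) \<in> (\<lambda>c. \<delta>*c) ` Bset (Suc N)" using img[OF vW] unfolding F_def by simp
        ultimately show "y \<in> ((\<lambda>c. \<delta>*c) ` Bset (Suc N)) \<times> Bset (Suc k)" unfolding y by (simp add: mem_Times_iff)
      qed
      have "card W = card (F ` W)" using card_image[OF injF] by simp
      also have "\<dots> \<le> card (((\<lambda>c. \<delta>*c) ` Bset (Suc N)) \<times> (Bset (Suc k) :: 'a poly set))"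
        by (rule card_mono[OF _ FW]) (simp add: finB)
      also have "\<dots> = card ((\<lambda>c. \<delta>*c) ` Bset (Suc N)) * card (Bset (Suc k) :: 'a poly set)"
        by (rule card_cartesian_product)
      also have "\<dots> \<le> card (Bset (Suc N) :: 'a poly set) * card (Bset (Suc k) :: 'a poly set)"
        by (intro mult_le_mono1 card_image_le finB)
      also have "\<dots> = q ^ (Suc N + Suc k)" by (simp add: cardB power_add)
      finally have cW: "card W \<le> q ^ (Suc N + Suc k)" .
      have ex: "Suc N + Suc k \<le> r + s + 2 - m" using h\<delta> mle krs unfolding N_def by arith
      have mrs: "m \<le> r + s" using h\<delta> mle by arith
      have "card P \<le> q ^ (r + s + 2 - m)"
        using cPW cW power_increasing[OF ex, of q] q2 by linarith
      then have "real (card P) \<le> real q ^ (r + s + 2 - m)" by (metis of_nat_le_iff of_nat_power)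
      moreover have ie: "int r + int s - int m + 2 = int (r + s + 2 - m)" using mrs by simp
      have pe: "real q powi (int r + int s - int m + 2) = real q ^ (r + s + 2 - m)"
        unfolding ie by (rule power_int_of_nat)
      ultimately have "real (card P) \<le> real q powi (int r + int s - int m + 2)" unfolding pe by simp
      then show ?thesis by (simp add: P_def q_def)
    qed
  qed
qed

end
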